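(* Let $(Q,F)$ be a finite ice quiver with $Q_0=\{1,\dots,m\}$ and $F_0=\{n+1,\dots,m\}$ ($1\le n\le m$), with Euler matrix $\widehat B$, and assume $\det\widehat B\neq0$. Let $\widetilde B$ be the $m\times n$ matrix formed by the first $n$ columns of $\widehat B$ and $\Lambda=|\det\widehat B|\cdot(\widehat B^{-T}-\widehat B^{-1})$. Then $(\widetilde B,\Lambda)$ is a compatible pair, and its type is $2|\det\widehat B|\cdot I_n$.
   Context: An ice quiver $(Q,F)$ is a quiver $Q$ with a subquiver $F$ (frozen vertices and arrows). The Euler matrix $\widehat B=(b_{ij})_{1\le i,j\le m}$ is defined by $b_{ii}=0$ for $1\le i\le n$, $b_{ii}=1$ for $i>n$, and for $i\neq j$, $b_{ij}=\#\{\text{unfrozen arrows } i\to j\}-\#\{\text{arrows } j\to i\}$. A pair $(\widetilde B,\Lambda)$ of an integer $m\times n$ matrix and a skew-symmetric integer $m\times m$ matrix is compatible if $\widetilde B^T\Lambda=(S\mid\mathbf 0)$ where $S$ is an $n\times n$ diagonal matrix with strictly positive integer diagonal entries and $\mathbf 0$ is the $n\times(m-n)$ zero matrix; $S$ is called the type. *)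

theory Defs
  imports "Jordan_Normal_Form.Gauss_Jordan_Elimination" "Jordan_Normal_Form.Determinant"
begin

text \<open>Arrows are elements of Q1 (of an arbitrary type), with source and target maps;
  F1 is the set of frozen arrows, a set of arrows between frozen vertices.\<close>
definition ice_quiver :: "nat \<Rightarrow> nat \<Rightarrow> 'e set \<Rightarrow> 'e set \<Rightarrow> ('e \<Rightarrow> nat) \<Rightarrow> ('e \<Rightarrow> nat) \<Rightarrow> bool" where
  "ice_quiver m n Q1 F1 src tgt \<longleftrightarrow>
     finite Q1 \<and> (\<forall>a\<in>Q1. src a \<in> {1..m} \<and> tgt a \<in> {1..m}) \<and>
     F1 \<subseteq> Q1 \<and> (\<forall>a\<in>F1. src a \<in> {n+1..m} \<and> tgt a \<in> {n+1..m})"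

definition euler_entry :: "nat \<Rightarrow> 'e set \<Rightarrow> 'e set \<Rightarrow> ('e \<Rightarrow> nat) \<Rightarrow> ('e \<Rightarrow> nat) \<Rightarrow> nat \<Rightarrow> nat \<Rightarrow> int" where
  "euler_entry n Q1 F1 src tgt i j =
     (if i = j then (if i \<le> n then 0 else 1)
      else int (card {a \<in> Q1 - F1. src a = i \<and> tgt a = j}) - int (card {a \<in> Q1. src a = j \<and> tgt a = i}))"

text \<open>The Euler matrix; matrix index i (0-based) corresponds to vertex i+1.\<close>
definition euler_mat :: "nat \<Rightarrow> nat \<Rightarrow> 'e set \<Rightarrow> 'e set \<Rightarrow> ('e \<Rightarrow> nat) \<Rightarrow> ('e \<Rightarrow> nat) \<Rightarrow> int mat" where
  "euler_mat m n Q1 F1 src tgt = mat m m (\<lambda>(i,j). euler_entry n Q1 F1 src tgt (i+1) (j+1))"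

definition compatible_of_type :: "int mat \<Rightarrow> int mat \<Rightarrow> int mat \<Rightarrow> bool" where
  "compatible_of_type B L S \<longleftrightarrow>
     (let m = dim_row B; n = dim_col B in
       L \<in> carrier_mat m m \<and> transpose_mat L = - L \<and>
       S \<in> carrier_mat n n \<and> (\<forall>i<n. \<forall>j<n. i \<noteq> j \<longrightarrow> S $$ (i,j) = 0) \<and> (\<forall>i<n. S $$ (i,i) > 0) \<and>
       (\<forall>i<n. \<forall>j<m. (transpose_mat B * L) $$ (i,j) = (if j < n then S $$ (i,j) else 0)))"

definition compatible_pair :: "int mat \<Rightarrow> int mat \<Rightarrow> bool" where
  "compatible_pair B L \<longleftrightarrow> (\<exists>S. compatible_of_type B L S)"

end

theory Submission
  imports Defs
begin

lemma euler_skew: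
  assumes q: "ice_quiver m n Q1 F1 src tgt" and i: "i < n" and k: "k < m" and nm: "n \<le> m"
  shows "euler_mat m n Q1 F1 src tgt $$ (k,i) = - euler_mat m n Q1 F1 src tgt $$ (i,k)"
proof -
  have F: "\<And>a. a \<in> F1 \<Longrightarrow> src a \<ge> n+1 \<and> tgt a \<ge> n+1" using q unfolding ice_quiver_def by auto
  have e1: "{a \<in> Q1. a \<notin> F1 \<and> src a = Suc i \<and> tgt a = Suc k} = {a \<in> Q1. src a = Suc i \<and> tgt a = Suc k}"
    using F i by fastforce
  have e2: "{a \<in> Q1. a \<notin> F1 \<and> src a = Suc k \<and> tgt a = Suc i} = {a \<in> Q1. src a = Suc k \<and> tgt a = Suc i}"
    using F i by fastforce
  show ?thesis using i k nm unfolding euler_mat_def euler_entry_def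
    by (simp add: e1 e2)
qed

theorem proposition4p1:
  fixes m n :: nat and Q1 F1 :: "'e set" and src tgt :: "'e \<Rightarrow> nat"
  assumes "1 \<le> n" "n \<le> m"
    and "ice_quiver m n Q1 F1 src tgt"
    and "det (euler_mat m n Q1 F1 src tgt) \<noteq> 0"
  shows "let Bh = euler_mat m n Q1 F1 src tgt;
             Bt = mat m n (\<lambda>(i,j). Bh $$ (i,j));
             d = \<bar>det Bh\<bar>;
             Binv = the (mat_inverse (map_mat rat_of_int Bh));
             Lam = smult_mat (rat_of_int d) (transpose_mat Binv - Binv)
         in \<exists>L :: int mat. map_mat rat_of_int L = Lam \<and> compatible_pair Bt L \<and>
              compatible_of_type Bt L (smult_mat (2 * d) (1\<^sub>m n))"
proof -
  define A where "A = euler_mat m n Q1 F1 src tgt"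
  have A: "A \<in> carrier_mat m m" unfolding A_def euler_mat_def by simp
  have d0: "det A \<noteq> 0" using assms(4) A_def by simp
  have skew: "\<And>i k. i < n \<Longrightarrow> k < m \<Longrightarrow> A $$ (k,i) = - A $$ (i,k)"
    unfolding A_def using euler_skew[OF assms(3) _ _ assms(2)] by blast
  define adj where "adj = adj_mat A"
  have adjC: "adj \<in> carrier_mat m m" and AA: "A * adj = det A \<cdot>\<^sub>m 1\<^sub>m m" and AA2: "adj * A = det A \<cdot>\<^sub>m 1\<^sub>m m"
    using adj_mat[OF A] adj_def by auto
  define s where "s = sgn (det A)"
  have sd: "s * det A = \<bar>det A\<bar>" unfolding s_def by (simp add: abs_if sgn_if)
  define L where "L = mat m m (\<lambda>(i,j). s * (adj $$ (j,i) - adj $$ (i,j)))"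
  define R where "R = map_mat rat_of_int A"
  have R: "R \<in> carrier_mat m m" using A R_def by simp
  have dR: "det R \<noteq> 0" unfolding R_def using d0 by simp
  obtain Binv where Bi: "mat_inverse R = Some Binv"
    using mat_inverse(1)[OF R] det_non_zero_imp_unit[OF R dR] by fastforce
  have BR: "Binv * R = 1\<^sub>m m" and BC: "Binv \<in> carrier_mat m m"
    using mat_inverse(2)[OF R Bi] by auto
  define C where "C = (1 / rat_of_int (det A)) \<cdot>\<^sub>m map_mat rat_of_int adj"
  have CC: "C \<in> carrier_mat m m" using adjC C_def by simp
  have RC: "R * C = 1\<^sub>m m"
  proof (rule eq_matI)
    fix i j assume ij: "i < dim_row (1\<^sub>m m)" "j < dim_col (1\<^sub>m m)"
    have "(R * C) $$ (i,j) = (\<Sum>k\<in>{0..<m}. of_int (A $$ (i,k)) * (of_int (adj $$ (k,j)) / of_int (det A)))"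
      using ij A adjC unfolding R_def C_def by (simp add: scalar_prod_def)
    also have "\<dots> = of_int (\<Sum>k\<in>{0..<m}. A $$ (i,k) * adj $$ (k,j)) / of_int (det A)"
      by (simp add: sum_divide_distrib)
    also have "(\<Sum>k\<in>{0..<m}. A $$ (i,k) * adj $$ (k,j)) = (A * adj) $$ (i,j)"
      using ij A adjC by (simp add: scalar_prod_def)
    also have "\<dots> = (if i = j then det A else 0)" using AA ij by simp
    finally show "(R * C) $$ (i,j) = 1\<^sub>m m $$ (i,j)" using ij d0 by simp
  qed (use R CC in auto)
  have "Binv = Binv * (R * C)" using RC BC by simp
  also have "\<dots> = (Binv * R) * C" using BC R CC by (simp add: assoc_mult_mat)
  also have "\<dots> = C" using BR CC by simp
  finally have BinvC: "Binv = C" .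
  have Bent: "\<And>i j. i < m \<Longrightarrow> j < m \<Longrightarrow> Binv $$ (i,j) = of_int (adj $$ (i,j)) / of_int (det A)"
    using BinvC adjC unfolding C_def by simp
  have Lam: "map_mat rat_of_int L = smult_mat (rat_of_int \<bar>det A\<bar>) (transpose_mat Binv - Binv)"
  proof (rule eq_matI)
    fix i j assume ij: "i < dim_row (smult_mat (rat_of_int \<bar>det A\<bar>) (transpose_mat Binv - Binv))"
      "j < dim_col (smult_mat (rat_of_int \<bar>det A\<bar>) (transpose_mat Binv - Binv))"
    hence ij': "i < m" "j < m" using BC by auto
    have "rat_of_int \<bar>det A\<bar> = of_int s * of_int (det A)" using sd by (metis of_int_mult)
    then show "map_mat rat_of_int L $$ (i,j) = smult_mat (rat_of_int \<bar>det A\<bar>) (transpose_mat Binv - Binv) $$ (i,j)"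
      using ij' BC Bent[OF ij'] Bent[of j i] d0 unfolding L_def
      by (simp add: field_simps)
  qed (use BC L_def in auto)
  define Bt where "Bt = mat m n (\<lambda>(i,j). A $$ (i,j))"
  have P1: "\<And>i j. i < m \<Longrightarrow> j < m \<Longrightarrow> (\<Sum>k\<in>{0..<m}. A $$ (i,k) * adj $$ (k,j)) = (if i = j then det A else 0)"
  proof -
    fix i j assume ij: "i < m" "j < m"
    have "(A * adj) $$ (i,j) = (\<Sum>k\<in>{0..<m}. A $$ (i,k) * adj $$ (k,j))"
      using ij A adjC by (simp add: scalar_prod_def)
    then show "?thesis i j" using AA ij by (cases "i = j") auto
  qed
  have P2: "\<And>i j. i < m \<Longrightarrow> j < m \<Longrightarrow> (\<Sum>k\<in>{0..<m}. adj $$ (j,k) * A $$ (k,i)) = (if i = j then det A else 0)"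
  proof -
    fix i j assume ij: "i < m" "j < m"
    have "(adj * A) $$ (j,i) = (\<Sum>k\<in>{0..<m}. adj $$ (j,k) * A $$ (k,i))"
      using ij A adjC by (simp add: scalar_prod_def)
    then show "?thesis i j" using AA2 ij by (cases "i = j") auto
  qed
  have key: "\<And>i j. i < n \<Longrightarrow> j < m \<Longrightarrow> (transpose_mat Bt * L) $$ (i,j) = (if i = j then 2 * \<bar>det A\<bar> else 0)"
  proof -
    fix i j assume ij: "i < n" "j < m"
    have im: "i < m" using ij assms(2) by simp
    have "(transpose_mat Bt * L) $$ (i,j) = (\<Sum>k\<in>{0..<m}. A $$ (k,i) * (s * (adj $$ (j,k) - adj $$ (k,j))))"
      using ij im unfolding Bt_def L_def by (simp add: scalar_prod_def)
    also have "\<dots> = (\<Sum>k\<in>{0..<m}. s * (adj $$ (j,k) * A $$ (k,i)) + s * (A $$ (i,k) * adj $$ (k,j)))"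
      using skew[OF ij(1)] by (intro sum.cong) (auto simp: algebra_simps)
    also have "\<dots> = s * (\<Sum>k\<in>{0..<m}. adj $$ (j,k) * A $$ (k,i)) + s * (\<Sum>k\<in>{0..<m}. A $$ (i,k) * adj $$ (k,j))"
      by (simp add: sum.distrib sum_distrib_left)
    also have "\<dots> = (if i = j then 2 * \<bar>det A\<bar> else 0)"
      using P1[OF im ij(2)] P2[OF im ij(2)] sd by auto
    finally show "?thesis i j" .
  qed
  have comp: "compatible_of_type Bt L (smult_mat (2 * \<bar>det A\<bar>) (1\<^sub>m n))"
    unfolding compatible_of_type_def Let_def
  proof (intro conjI allI impI)
    show "L \<in> carrier_mat (dim_row Bt) (dim_row Bt)" unfolding L_def Bt_def by simp
    show "transpose_mat L = - L" unfolding L_def by (rule eq_matI) (auto simp: algebra_simps)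
  qed (use key d0 assms(2) in \<open>auto simp: Bt_def\<close>)
  show ?thesis unfolding Let_def A_def[symmetric] Bt_def[symmetric] R_def[symmetric] Bi option.sel
    using Lam comp compatible_pair_def by blast
qed

end
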